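(* Let $G$ be an edge-colored graph of order $n\geq 3$. If $e(G)+c(G)\geq\binom{n+1}{2}$ and $G$ contains exactly one rainbow triangle, then $G$ belongs to $\mathcal{G}_1$.
   Context: An edge-colored graph is a finite simple graph $G$ with a map $C:E(G)\to\mathbb{N}$. $e(G)=|E(G)|$, $c(G)$ is the number of distinct colors appearing on $E(G)$. A subgraph is rainbow if all its edges have distinct colors, monochromatic if all its edges have the same color. For disjoint $S,S'\subseteq V(G)$, $G[S,S']$ is the bipartite subgraph with classes $S,S'$ and all edges of $G$ between them. The family $\mathcal{G}_0$ of edge-colored complete graphs is defined recursively: $K_1\in\mathcal{G}_0$; an edge-colored complete graph $G$ of order $n\ge 2$ belongs to $\mathcal{G}_0$ iff $c(G)=n-1$ and there is a partition $V(G)=V_1\cup V_2$ into nonempty sets with $G[V_1,V_2]$ monochromatic and $G[V_i]\in\mathcal{G}_0$ for $i=1,2$. The family $\mathcal{G}_1$ of edge-colored complete graphs is defined by: the rainbow triangle (complete graph on 3 vertices with 3 distinct colors) belongs to $\mathcal{G}_1$; an edge-colored complete graph $G$ of order $n\ge 4$ belongs to $\mathcal{G}_1$ iff $c(G)=n$ and there is a partition $V(G)=V_1\cup V_2$ into nonempty sets such that $G[V_1,V_2]$ is monochromatic, $G[V_1]\in\mathcal{G}_1$ and $G[V_2]\in\mathcal{G}_0$. *)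

theory Defs
  imports Main
begin

text \<open>An edge-colored (finite simple) graph is given by a finite vertex set V,
 an edge set E of 2-element subsets of V, and a coloring C of edges by naturals.
 Colors on non-edges are irrelevant.\<close>

definition all_edges :: "'a set \<Rightarrow> 'a set set" where
  "all_edges V = {e. e \<subseteq> V \<and> card e = 2}"

definition edge_colored_graph :: "'a set \<Rightarrow> 'a set set \<Rightarrow> bool" where
  "edge_colored_graph V E \<longleftrightarrow> finite V \<and> E \<subseteq> all_edges V"

definition num_colors :: "'a set set \<Rightarrow> ('a set \<Rightarrow> nat) \<Rightarrow> nat" where
  "num_colors E C = card (C ` E)"

definition mono_between :: "'a set \<Rightarrow> 'a set \<Rightarrow> ('a set \<Rightarrow> nat) \<Rightarrow> bool" where
  "mono_between S S' C \<longleftrightarrow> (\<exists>k. \<forall>x\<in>S. \<forall>y\<in>S'. C {x, y} = k)"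

definition rainbow_triangles :: "'a set \<Rightarrow> 'a set set \<Rightarrow> ('a set \<Rightarrow> nat) \<Rightarrow> 'a set set" where
  "rainbow_triangles V E C =
     {T. T \<subseteq> V \<and> card T = 3 \<and> all_edges T \<subseteq> E \<and> card (C ` all_edges T) = 3}"

inductive in_G0 :: "'a set \<Rightarrow> ('a set \<Rightarrow> nat) \<Rightarrow> bool" where
  single: "card V = 1 \<Longrightarrow> in_G0 V C"
| split: "\<lbrakk> finite V; card V \<ge> 2; num_colors (all_edges V) C = card V - 1;
           V1 \<union> V2 = V; V1 \<inter> V2 = {}; V1 \<noteq> {}; V2 \<noteq> {};
           mono_between V1 V2 C; in_G0 V1 C; in_G0 V2 C \<rbrakk> \<Longrightarrow> in_G0 V C"

inductive in_G1 :: "'a set \<Rightarrow> ('a set \<Rightarrow> nat) \<Rightarrow> bool" where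
  triangle: "\<lbrakk> card V = 3; num_colors (all_edges V) C = 3 \<rbrakk> \<Longrightarrow> in_G1 V C"
| split: "\<lbrakk> finite V; card V \<ge> 4; num_colors (all_edges V) C = card V;
           V1 \<union> V2 = V; V1 \<inter> V2 = {}; V1 \<noteq> {}; V2 \<noteq> {};
           mono_between V1 V2 C; in_G1 V1 C; in_G0 V2 C \<rbrakk> \<Longrightarrow> in_G1 V C"

end

theory Submission
  imports Defs
begin

definition vdeg :: "'a set set \<Rightarrow> 'a \<Rightarrow> nat" where
  "vdeg E v = card {e\<in>E. v \<in> e}"
definition delv :: "'a set set \<Rightarrow> 'a \<Rightarrow> 'a set set" where
  "delv E v = {e\<in>E. v \<notin> e}"
definition satc :: "'a set set \<Rightarrow> ('a set \<Rightarrow> nat) \<Rightarrow> 'a \<Rightarrow> nat set" where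
  "satc E C v = {c \<in> C ` E. \<forall>e\<in>E. C e = c \<longrightarrow> v \<in> e}"

lemma ecg_finE: "edge_colored_graph V E \<Longrightarrow> finite E"
  unfolding edge_colored_graph_def all_edges_def
  by (metis (no_types, lifting) Collect_mono_iff finite_Collect_subsets rev_finite_subset)

lemma ecg_edge: "edge_colored_graph V E \<Longrightarrow> e \<in> E \<Longrightarrow> e \<subseteq> V \<and> card e = 2"
  unfolding edge_colored_graph_def all_edges_def by auto

lemma all_edges_iff: "e \<in> all_edges V \<longleftrightarrow> (\<exists>x y. x \<in> V \<and> y \<in> V \<and> x \<noteq> y \<and> e = {x,y})"
  unfolding all_edges_def by (auto simp: card_2_iff)

lemma pair_in_all_edges[simp]: "{x,y} \<in> all_edges V \<longleftrightarrow> x \<in> V \<and> y \<in> V \<and> x \<noteq> y"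
  unfolding all_edges_def by (auto simp: card_2_iff)

lemma card_all_edges: "finite V \<Longrightarrow> card (all_edges V) = card V choose 2"
  unfolding all_edges_def using n_subsets by blast

lemma all_edges_mono: "W \<subseteq> V \<Longrightarrow> all_edges W \<subseteq> all_edges V"
  unfolding all_edges_def by auto

lemma all_edges_del: "all_edges (V - {v}) = delv (all_edges V) v"
  unfolding all_edges_def delv_def by auto

lemma edge_at: "card e = 2 \<Longrightarrow> v \<in> e \<Longrightarrow> \<exists>x. x \<noteq> v \<and> e = {v,x}"
  by (auto simp: card_2_iff)

lemma card_E_split: "edge_colored_graph V E \<Longrightarrow> card E = card (delv E v) + vdeg E v"
proof -
  assume g: "edge_colored_graph V E"
  have "E = delv E v \<union> {e\<in>E. v \<in> e}" unfolding delv_def by auto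
  moreover have "delv E v \<inter> {e\<in>E. v \<in> e} = {}" unfolding delv_def by auto
  moreover have "finite E" using ecg_finE[OF g] .
  ultimately show ?thesis unfolding vdeg_def
    by (metis (no_types, lifting) card_Un_disjoint finite_Un)
qed

lemma colors_split: "finite E \<Longrightarrow> num_colors E C = num_colors (delv E v) C + card (satc E C v)"
proof -
  assume f: "finite E"
  have "C ` E = C ` delv E v \<union> satc E C v" unfolding delv_def satc_def by blast
  moreover have "C ` delv E v \<inter> satc E C v = {}" unfolding delv_def satc_def by auto
  ultimately show ?thesis unfolding num_colors_def
    by (metis card_Un_disjoint f finite_Un finite_imageI)
qed

lemma vdeg_le: assumes g: "edge_colored_graph V E" and v: "v \<in> V"
  shows "vdeg E v \<le> card V - 1"
proof -
  have "{e\<in>E. v \<in> e} \<subseteq> (\<lambda>x. {v,x}) ` (V - {v})"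
  proof
    fix e assume "e \<in> {e\<in>E. v \<in> e}"
    then have "e \<in> E" "v \<in> e" by auto
    with ecg_edge[OF g] obtain x where "x \<noteq> v" "e = {v,x}" using edge_at by metis
    moreover have "x \<in> V" using ecg_edge[OF g \<open>e\<in>E\<close>] calculation by auto
    ultimately show "e \<in> (\<lambda>x. {v,x}) ` (V - {v})" by auto
  qed
  then have "vdeg E v \<le> card ((\<lambda>x. {v,x}) ` (V - {v}))" unfolding vdeg_def
    using g edge_colored_graph_def by (meson card_mono finite_Diff finite_imageI)
  also have "\<dots> \<le> card (V - {v})" by (rule card_image_le) (use g edge_colored_graph_def in auto)
  also have "\<dots> = card V - 1" using v by simp
  finally show ?thesis .
qed

lemma ecg_delv: "edge_colored_graph V E \<Longrightarrow> edge_colored_graph (V - {v}) (delv E v)"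
  unfolding edge_colored_graph_def all_edges_def delv_def by auto

lemma RT_delv: "rainbow_triangles (V - {v}) (delv E v) C = {T \<in> rainbow_triangles V E C. v \<notin> T}"
  unfolding rainbow_triangles_def delv_def all_edges_def by auto

lemma RT_sub: "W \<subseteq> V \<Longrightarrow> rainbow_triangles W (all_edges W) C = {T \<in> rainbow_triangles V (all_edges V) C. T \<subseteq> W}"
  unfolding rainbow_triangles_def all_edges_def by auto

lemma all_edges_3': "x\<noteq>y \<Longrightarrow> x\<noteq>z \<Longrightarrow> y\<noteq>z \<Longrightarrow> all_edges {x,y,z} = {{x,y},{x,z},{y,z}}"
  by (rule set_eqI, unfold all_edges_iff, auto)

lemma card3_distinct: "card {a,b,c} = 3 \<longleftrightarrow> a \<noteq> b \<and> a \<noteq> c \<and> b \<noteq> c"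
  by (auto simp: card_insert_if)

lemma RT_mem: "T \<in> rainbow_triangles V E C \<longleftrightarrow>
   (\<exists>x y z. T = {x,y,z} \<and> x\<noteq>y \<and> x\<noteq>z \<and> y\<noteq>z \<and> x \<in> V \<and> y \<in> V \<and> z \<in> V \<and>
      {x,y} \<in> E \<and> {x,z} \<in> E \<and> {y,z} \<in> E \<and> C{x,y} \<noteq> C{x,z} \<and> C{x,y} \<noteq> C{y,z} \<and> C{x,z} \<noteq> C{y,z})" (is "?L \<longleftrightarrow> ?R")
proof
  assume "T \<in> rainbow_triangles V E C"
  then have h: "T \<subseteq> V" "card T = 3" "all_edges T \<subseteq> E" "card (C ` all_edges T) = 3"
    unfolding rainbow_triangles_def by auto
  from h(2) obtain x y z where xyz: "T = {x,y,z}" "x\<noteq>y" "y\<noteq>z" "x\<noteq>z" by (auto simp: card_3_iff)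
  have ae: "all_edges T = {{x,y},{x,z},{y,z}}" using all_edges_3' xyz by simp
  show ?R
    apply (rule exI[of _ x], rule exI[of _ y], rule exI[of _ z])
    using h xyz ae by (simp add: card3_distinct)
next
  assume "\<exists>x y z. T = {x,y,z} \<and> x\<noteq>y \<and> x\<noteq>z \<and> y\<noteq>z \<and> x \<in> V \<and> y \<in> V \<and> z \<in> V \<and>
      {x,y} \<in> E \<and> {x,z} \<in> E \<and> {y,z} \<in> E \<and> C{x,y} \<noteq> C{x,z} \<and> C{x,y} \<noteq> C{y,z} \<and> C{x,z} \<noteq> C{y,z}"
  then obtain x y z where h: "T = {x,y,z}" "x\<noteq>y" "x\<noteq>z" "y\<noteq>z" "x \<in> V" "y \<in> V" "z \<in> V"
      "{x,y} \<in> E" "{x,z} \<in> E" "{y,z} \<in> E" "C{x,y} \<noteq> C{x,z}" "C{x,y} \<noteq> C{y,z}" "C{x,z} \<noteq> C{y,z}"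
    by blast
  have ae: "all_edges T = {{x,y},{x,z},{y,z}}" using all_edges_3' h by simp
  show "T \<in> rainbow_triangles V E C" unfolding rainbow_triangles_def
    using h ae by (simp add: card3_distinct)
qed

lemma ch2: "Suc n choose 2 = (n choose 2) + n"
  by (simp add: numeral_2_eq_2)

lemma sat_rep: assumes g: "edge_colored_graph V E" and a: "a \<in> satc E C v"
  shows "\<exists>x. x \<noteq> v \<and> x \<in> V \<and> {v,x} \<in> E \<and> C{v,x} = a"
proof -
  obtain e where e: "e \<in> E" "C e = a" "v \<in> e" using a unfolding satc_def by auto
  then obtain x where "x \<noteq> v" "e = {v,x}" using edge_at ecg_edge[OF g] by metis
  moreover have "x \<in> V" using ecg_edge[OF g e(1)] calculation by auto
  ultimately show ?thesis using e by auto
qed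

lemma sat_color: "a \<in> satc E C v \<Longrightarrow> e \<in> E \<Longrightarrow> v \<notin> e \<Longrightarrow> C e \<noteq> a"
  unfolding satc_def by auto

lemma key:
  assumes g: "edge_colored_graph V E" and v: "v \<in> V" and a: "a \<in> satc E C v"
    and x: "{v,x} \<in> E" "C{v,x} = a"
    and noRT: "\<forall>T\<in>rainbow_triangles V E C. \<not> ({v,x} \<subseteq> T)"
  shows "vdeg E x + card (satc E C v) \<le> card V"
proof -
  have fV: "finite V" using g edge_colored_graph_def by auto
  have xv: "x \<noteq> v" "x \<in> V" using ecg_edge[OF g x(1)] by (auto simp: card_2_iff)
  define rep where "rep b = (SOME y. y \<noteq> v \<and> y \<in> V \<and> {v,y} \<in> E \<and> C{v,y} = b)" for b
  have rep: "rep b \<noteq> v \<and> rep b \<in> V \<and> {v,rep b} \<in> E \<and> C{v,rep b} = b" if "b \<in> satc E C v" for b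
    unfolding rep_def using someI_ex[OF sat_rep[OF g that]] .
  define R where "R = rep ` (satc E C v - {a})"
  have fS: "finite (satc E C v)" unfolding satc_def using ecg_finE[OF g] by auto
  have injR: "inj_on rep (satc E C v - {a})"
    by (rule inj_onI) (metis DiffD1 rep)
  have cR: "card R = card (satc E C v) - 1" unfolding R_def
    using card_image[OF injR] a fS by simp
  define N where "N = {y. {x,y} \<in> E}"
  have "{e\<in>E. x \<in> e} \<subseteq> (\<lambda>y. {x,y}) ` N"
  proof
    fix e assume "e \<in> {e\<in>E. x \<in> e}"
    then have "e \<in> E" "x \<in> e" by auto
    then obtain y where "e = {x,y}" using edge_at ecg_edge[OF g] by metis
    then show "e \<in> (\<lambda>y. {x,y}) ` N" using \<open>e\<in>E\<close> N_def by auto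
  qed
  have NV: "N \<subseteq> V - {x}"
  proof
    fix y assume "y \<in> N"
    then have "{x,y} \<in> E" unfolding N_def by auto
    from ecg_edge[OF g this] have h: "{x,y} \<subseteq> V" "card {x,y} = 2" by auto
    have "x \<noteq> y" using h(2) by (cases "x = y") simp_all
    then show "y \<in> V - {x}" using h(1) by simp
  qed
  have fN: "finite N" using NV fV finite_subset by blast
  have "card {e\<in>E. x \<in> e} \<le> card ((\<lambda>y. {x,y}) ` N)"
    by (rule card_mono) (use fN \<open>{e\<in>E. x \<in> e} \<subseteq> (\<lambda>y. {x,y}) ` N\<close> in auto)
  also have "\<dots> \<le> card N" by (rule card_image_le[OF fN])
  finally have dN: "vdeg E x \<le> card N" unfolding vdeg_def .
  have RV: "R \<subseteq> V - {x}" unfolding R_def using rep x by fastforce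
  have NR: "N \<inter> R = {}"
  proof (rule ccontr)
    assume "N \<inter> R \<noteq> {}"
    then obtain b where b: "b \<in> satc E C v" "b \<noteq> a" "{x, rep b} \<in> E" unfolding N_def R_def by auto
    let ?y = "rep b"
    have yv: "?y \<noteq> v" "?y \<in> V" "{v,?y} \<in> E" "C{v,?y} = b" using rep b(1) by auto
    have xy: "x \<noteq> ?y" using yv x b by auto
    have c1: "C{x,?y} \<noteq> a" using sat_color[OF a b(3)] yv xv by auto
    have c2: "C{x,?y} \<noteq> b" using sat_color[OF b(1) b(3)] yv xv by auto
    have "{v,x,?y} \<in> rainbow_triangles V E C" unfolding RT_mem
      apply (rule exI[of _ v], rule exI[of _ x], rule exI[of _ ?y])
      using xv yv xy x b c1 c2 v by auto
    then show False using noRT by auto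
  qed
  have "card N + card R \<le> card (V - {x})"
    by (metis NR NV RV card_Un_disjoint card_mono fN fV finite_Diff finite_subset le_sup_iff)
  moreover have "card V > 0" using xv fV card_gt_0_iff by blast
  ultimately show ?thesis using dN cR xv fV a by (cases "card (satc E C v)") auto
qed

lemma low_vertex:
  assumes g: "edge_colored_graph V E" and ne: "V \<noteq> {}"
    and good: "\<And>v. v \<in> V \<Longrightarrow> (\<forall>w\<in>V. card (satc E C w) \<le> card (satc E C v)) \<Longrightarrow>
        card (satc E C v) \<ge> 2 \<Longrightarrow> \<exists>a. a \<in> satc E C v \<and> (\<exists>x. {v,x} \<in> E \<and> C{v,x} = a \<and>
          (\<forall>T\<in>rainbow_triangles V E C. \<not> ({v,x} \<subseteq> T)))"
  shows "\<exists>v\<in>V. vdeg E v + card (satc E C v) \<le> card V"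
proof (rule ccontr)
  assume H: "\<not> ?thesis"
  have fV: "finite V" using g edge_colored_graph_def by auto
  let ?s = "\<lambda>w. card (satc E C w)"
  have "Max (?s ` V) \<in> ?s ` V" using fV ne by (intro Max_in) auto
  then obtain v where v1: "v \<in> V" "?s v = Max (?s ` V)" by auto
  have "\<forall>w\<in>V. ?s w \<le> ?s v" using v1(2) fV by auto
  note v = v1(1) this
  have "vdeg E v \<le> card V - 1" using vdeg_le[OF g v(1)] .
  moreover have "vdeg E v + ?s v > card V" using H v by auto
  moreover have "card V > 0" using fV v(1) card_gt_0_iff by blast
  ultimately have s2: "?s v \<ge> 2" by linarith
  obtain a x where ax: "a \<in> satc E C v" "{v,x} \<in> E" "C{v,x} = a"
       "\<forall>T\<in>rainbow_triangles V E C. \<not> ({v,x} \<subseteq> T)"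
    using good[OF v s2] by blast
  have xV: "x \<in> V" using ecg_edge[OF g ax(2)] by auto
  have "vdeg E x + ?s v \<le> card V" using key[OF g v(1) ax] .
  moreover have "vdeg E x + ?s x > card V" using H xV by auto
  ultimately show False using v(2) xV by fastforce
qed

lemma thmA:
  assumes "edge_colored_graph V E" "V \<noteq> {}" "rainbow_triangles V E C = {}"
  shows "card E + num_colors E C < Suc (card V) choose 2"
  using assms
proof (induction "card V" arbitrary: V E rule: less_induct)
  case less
  have fV: "finite V" using less.prems edge_colored_graph_def by auto
  show ?case
  proof (cases "card V = 1")
    case True
    have "finite (all_edges V)" unfolding all_edges_def
      by (rule rev_finite_subset[of "Pow V"]) (use fV in auto)
    moreover have "card (all_edges V) = 0" using card_all_edges[OF fV] True by simp
    ultimately have "all_edges V = {}" by simp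
    then have "E = {}" using less.prems(1) edge_colored_graph_def by auto
    then show ?thesis using True by (simp add: num_colors_def)
  next
    case False
    have "card V > 0" using less.prems(2) fV card_gt_0_iff by blast
    then have c2: "card V \<ge> 2" using False by linarith
    have "\<exists>v\<in>V. vdeg E v + card (satc E C v) \<le> card V"
    proof (rule low_vertex[OF less.prems(1,2)])
      fix w assume "w \<in> V" "2 \<le> card (satc E C w)"
      then obtain a where a: "a \<in> satc E C w" by fastforce
      then obtain x where "{w,x} \<in> E" "C{w,x} = a" using sat_rep[OF less.prems(1) a] by blast
      then show "\<exists>a. a \<in> satc E C w \<and> (\<exists>x. {w,x} \<in> E \<and> C{w,x} = a \<and>
          (\<forall>T\<in>rainbow_triangles V E C. \<not> ({w,x} \<subseteq> T)))" using a less.prems(3) by blast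
    qed
    then obtain v where v: "v \<in> V" "vdeg E v + card (satc E C v) \<le> card V" by blast
    have cV: "card (V - {v}) = card V - 1" using v(1) fV by simp
    have "card (V - {v}) > 0" using cV c2 by simp
    then have ne: "V - {v} \<noteq> {}" by (metis card.empty less_irrefl)
    have IH: "card (delv E v) + num_colors (delv E v) C < Suc (card (V - {v})) choose 2"
      apply (rule less.hyps)
      using cV c2 apply simp
      using ecg_delv[OF less.prems(1)] apply simp
      using ne apply simp
      using RT_delv[of V v E C] less.prems(3) by simp
    have "card E + num_colors E C = card (delv E v) + num_colors (delv E v) C + (vdeg E v + card (satc E C v))"
      using card_E_split[OF less.prems(1), of v] colors_split[OF ecg_finE[OF less.prems(1)], of C v] by simp
    moreover have "Suc (card V) choose 2 = (Suc (card (V - {v})) choose 2) + card V"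
      using cV c2 ch2[of "card V"] by (simp add: Suc_diff_1)
    ultimately show ?thesis using IH v(2) by linarith
  qed
qed

lemma ch2': "n \<ge> 1 \<Longrightarrow> Suc n choose 2 = (n choose 2) + n" using ch2 by simp

lemma colA:
  assumes "finite W" "W \<noteq> {}" "rainbow_triangles W (all_edges W) C = {}"
  shows "num_colors (all_edges W) C \<le> card W - 1"
proof -
  have g: "edge_colored_graph W (all_edges W)" using assms(1) by (simp add: edge_colored_graph_def)
  have "card (all_edges W) + num_colors (all_edges W) C < Suc (card W) choose 2"
    using thmA[OF g assms(2,3)] .
  then show ?thesis using card_all_edges[OF assms(1)] ch2[of "card W"] by simp
qed

lemma cut_colors:
  assumes "V1 \<union> V2 = V" "\<And>x y. x \<in> V1 \<Longrightarrow> y \<in> V2 \<Longrightarrow> C{x,y} = k"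
  shows "C ` all_edges V \<subseteq> C ` all_edges V1 \<union> C ` all_edges V2 \<union> {k}"
proof
  fix c assume "c \<in> C ` all_edges V"
  then obtain x y where xy: "x \<in> V" "y \<in> V" "x \<noteq> y" "c = C{x,y}" by (auto simp: all_edges_iff)
  show "c \<in> C ` all_edges V1 \<union> C ` all_edges V2 \<union> {k}"
  proof (cases "x \<in> V1")
    case True
    show ?thesis
    proof (cases "y \<in> V1")
      case True
      then show ?thesis using \<open>x \<in> V1\<close> xy by (metis UnI1 image_eqI pair_in_all_edges)
    next
      case False
      then have "y \<in> V2" using xy assms(1) by auto
      then show ?thesis using assms(2) \<open>x \<in> V1\<close> xy by auto
    qed
  next
    case False
    then have x2: "x \<in> V2" using xy assms(1) by auto
    show ?thesis
    proof (cases "y \<in> V1")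
      case True
      then show ?thesis using assms(2)[OF True x2] xy by (simp add: insert_commute)
    next
      case False
      then have "y \<in> V2" using xy assms(1) by auto
      then show ?thesis using x2 xy by (metis UnI1 UnI2 image_eqI pair_in_all_edges)
    qed
  qed
qed

lemma cut_count:
  assumes "finite V" "V1 \<union> V2 = V" "\<And>x y. x \<in> V1 \<Longrightarrow> y \<in> V2 \<Longrightarrow> C{x,y} = k"
  shows "num_colors (all_edges V) C \<le> num_colors (all_edges V1) C + num_colors (all_edges V2) C + 1"
proof -
  have f: "finite (all_edges W)" if "finite W" for W :: "'a set" unfolding all_edges_def
    by (rule rev_finite_subset[of "Pow W"]) (use that in auto)
  have f1: "finite V1" "finite V2" using assms(1,2) by auto
  have "num_colors (all_edges V) C \<le> card (C ` all_edges V1 \<union> C ` all_edges V2 \<union> {k})"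
    unfolding num_colors_def by (rule card_mono) (use cut_colors[of V1 V2 V C k, OF assms(2,3)] f f1 in auto)
  also have "\<dots> \<le> card (C ` all_edges V1 \<union> C ` all_edges V2) + 1"
    using card_Un_le[of "C ` all_edges V1 \<union> C ` all_edges V2" "{k}"] by simp
  also have "\<dots> \<le> num_colors (all_edges V1) C + num_colors (all_edges V2) C + 1"
    unfolding num_colors_def using card_Un_le by simp
  finally show ?thesis .
qed

definition ext_ctx :: "'a set \<Rightarrow> 'a \<Rightarrow> nat \<Rightarrow> ('a set \<Rightarrow> nat) \<Rightarrow> bool" where
  "ext_ctx V v a C \<longleftrightarrow> finite V \<and> v \<in> V \<and> (\<forall>e\<in>all_edges V. C e = a \<longrightarrow> v \<in> e) \<and>
     (\<forall>x\<in>V. \<forall>y\<in>V. x \<noteq> v \<longrightarrow> y \<noteq> v \<longrightarrow> x \<noteq> y \<longrightarrow>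
        C{v,x} = C{v,y} \<or> C{v,x} = C{x,y} \<or> C{v,y} = C{x,y})"

lemma S1:
  assumes ctx: "ext_ctx V v a C" and W: "W1 \<union> W2 = V - {v}" "W1 \<inter> W2 = {}"
    and cr: "\<And>x y. x \<in> W1 \<Longrightarrow> y \<in> W2 \<Longrightarrow> C{x,y} = k"
    and x: "x \<in> W1" "C{v,x} = a" and y: "y \<in> W2"
  shows "C{v,y} = a \<or> C{v,y} = k"
proof -
  have xy: "x \<in> V" "y \<in> V" "x \<noteq> v" "y \<noteq> v" "x \<noteq> y" using W x y by auto
  have "C{x,y} \<noteq> a" using ctx xy unfolding ext_ctx_def by auto
  moreover have "C{x,y} = k" using cr x y by auto
  moreover have "C{v,x} = C{v,y} \<or> C{v,x} = C{x,y} \<or> C{v,y} = C{x,y}"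
    using ctx xy unfolding ext_ctx_def by blast
  ultimately show ?thesis using x by auto
qed

lemma S2:
  assumes ctx: "ext_ctx V v a C" and W: "W1 \<union> W2 = V - {v}"
    and k1: "k \<notin> C ` all_edges W1"
    and x: "x \<in> W1" "C{v,x} = a" and y: "y \<in> W1" "C{v,y} \<noteq> a"
  shows "C{v,y} \<noteq> k"
proof
  assume yk: "C{v,y} = k"
  have xy: "x \<in> V" "y \<in> V" "x \<noteq> v" "y \<noteq> v" "x \<noteq> y" using W x y by auto
  have "C{x,y} \<noteq> a" using ctx xy unfolding ext_ctx_def by auto
  moreover have "C{x,y} \<noteq> k" using k1 x y xy by (metis image_eqI pair_in_all_edges)
  moreover have "C{v,x} = C{v,y} \<or> C{v,x} = C{x,y} \<or> C{v,y} = C{x,y}"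
    using ctx xy unfolding ext_ctx_def by blast
  ultimately show False using x y yk by auto
qed

lemma S_contra:
  assumes ctx: "ext_ctx V v a C" and W: "W1 \<union> W2 = V - {v}" "W1 \<inter> W2 = {}"
    and cr: "\<And>x y. x \<in> W2 \<Longrightarrow> y \<in> W1 \<Longrightarrow> C{x,y} = k"
    and k1: "k \<notin> C ` all_edges W1"
    and x1: "x1 \<in> W1" "C{v,x1} = a" and x2: "x2 \<in> W2" "C{v,x2} = a"
    and y: "y \<in> W1" "C{v,y} \<noteq> a"
  shows False
proof -
  have "C{v,y} = a \<or> C{v,y} = k"
    by (rule S1[OF ctx _ _ cr x2 y(1)]) (use W in auto)
  then have "C{v,y} = k" using y by auto
  moreover have "C{v,y} \<noteq> k" by (rule S2[OF ctx W(1) k1 x1 y])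
  ultimately show False by simp
qed

lemma ext_cut:
  assumes ctx: "ext_ctx V v a C" and x0: "x0 \<in> V" "x0 \<noteq> v" "C{v,x0} = a"
    and W: "W1 \<union> W2 = V - {v}" "W1 \<inter> W2 = {}" "W1 \<noteq> {}" "W2 \<noteq> {}"
    and cr: "\<And>x y. x \<in> W1 \<Longrightarrow> y \<in> W2 \<Longrightarrow> C{x,y} = k"
    and k1: "k \<notin> C ` all_edges W1" and k2: "k \<notin> C ` all_edges W2"
  shows "\<exists>V1 V2. V1 \<union> V2 = V \<and> V1 \<inter> V2 = {} \<and> V1 \<noteq> {} \<and> V2 \<noteq> {} \<and> mono_between V1 V2 C"
proof -
  have vV: "v \<in> V" using ctx unfolding ext_ctx_def by blast
  have cr': "C{x,y} = k" if "x \<in> W2" "y \<in> W1" for x y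
  proof -
    have "C{y,x} = k" using cr that by blast
    moreover have "{y,x} = {x,y}" by blast
    ultimately show ?thesis by simp
  qed
  have W': "W2 \<union> W1 = V - {v}" "W2 \<inter> W1 = {}" using W by auto
  show ?thesis
  proof (cases "\<forall>x\<in>V - {v}. C{v,x} = a")
    case True
    have "{v} \<union> (V - {v}) = V" "{v} \<inter> (V - {v}) = {}" "{v} \<noteq> {}" "V - {v} \<noteq> {}"
      using vV W by auto
    moreover have "mono_between {v} (V - {v}) C" unfolding mono_between_def
      by (rule exI[of _ a]) (use True in auto)
    ultimately show ?thesis by blast
  next
    case False
    then obtain y where y: "y \<in> V - {v}" "C{v,y} \<noteq> a" by auto
    have notboth: "\<not> ((\<exists>x1\<in>W1. C{v,x1} = a) \<and> (\<exists>x2\<in>W2. C{v,x2} = a))"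
    proof
      assume "(\<exists>x1\<in>W1. C{v,x1} = a) \<and> (\<exists>x2\<in>W2. C{v,x2} = a)"
      then obtain x1 x2 where x12: "x1 \<in> W1" "C{v,x1} = a" "x2 \<in> W2" "C{v,x2} = a" by blast
      show False
      proof (cases "y \<in> W1")
        case True
        show False by (rule S_contra[OF ctx W(1,2) cr' k1 x12 True y(2)])
      next
        case False
        then have "y \<in> W2" using y W by auto
        show False by (rule S_contra[OF ctx W' cr k2 x12(3,4) x12(1,2) \<open>y \<in> W2\<close> y(2)])
      qed
    qed
    show ?thesis
    proof (cases "\<exists>x1\<in>W1. C{v,x1} = a")
      case True
      then obtain x1 where x1: "x1 \<in> W1" "C{v,x1} = a" by blast
      have allk: "\<forall>z\<in>W2. C{v,z} = k"
      proof
        fix z assume z: "z \<in> W2"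
        have "C{v,z} = a \<or> C{v,z} = k" by (rule S1[OF ctx W(1,2) cr x1 z])
        moreover have "C{v,z} \<noteq> a" using notboth True z by blast
        ultimately show "C{v,z} = k" by simp
      qed
      have "(W1 \<union> {v}) \<union> W2 = V" "(W1 \<union> {v}) \<inter> W2 = {}" "W1 \<union> {v} \<noteq> {}" "W2 \<noteq> {}"
        using W vV by auto
      moreover have "mono_between (W1 \<union> {v}) W2 C" unfolding mono_between_def
        by (rule exI[of _ k]) (use allk cr in auto)
      ultimately show ?thesis by (intro exI[of _ "W1 \<union> {v}"] exI[of _ W2]) simp
    next
      case False
      then have "x0 \<in> W2" using x0 W by auto
      have allk: "\<forall>z\<in>W1. C{v,z} = k"
      proof
        fix z assume z: "z \<in> W1"
        have "C{v,z} = a \<or> C{v,z} = k" by (rule S1[OF ctx W' cr' \<open>x0 \<in> W2\<close> x0(3) z])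
        moreover have "C{v,z} \<noteq> a" using False z by blast
        ultimately show "C{v,z} = k" by simp
      qed
      have "W1 \<union> (W2 \<union> {v}) = V" "W1 \<inter> (W2 \<union> {v}) = {}" "W1 \<noteq> {}" "W2 \<union> {v} \<noteq> {}"
        using W vV by auto
      moreover have "mono_between W1 (W2 \<union> {v}) C" unfolding mono_between_def
      proof (rule exI[of _ k], intro ballI)
        fix x y assume "x \<in> W1" "y \<in> W2 \<union> {v}"
        then show "C{x,y} = k"
        proof (cases "y = v")
          case True
          have "{x,v} = {v,x}" by blast
          then show ?thesis using allk \<open>x \<in> W1\<close> True by simp
        next
          case False
          then show ?thesis using cr \<open>x \<in> W1\<close> \<open>y \<in> W2 \<union> {v}\<close> by blast
        qed
      qed
      ultimately show ?thesis by (intro exI[of _ W1] exI[of _ "W2 \<union> {v}"]) simp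
    qed
  qed
qed

lemma low_noRT:
  assumes g: "edge_colored_graph V E" and ne: "V \<noteq> {}" and rt: "rainbow_triangles V E C = {}"
  shows "\<exists>v\<in>V. vdeg E v + card (satc E C v) \<le> card V"
proof (rule low_vertex[OF g ne])
  fix w assume "w \<in> V" "2 \<le> card (satc E C w)"
  then obtain a where a: "a \<in> satc E C w" by fastforce
  then obtain x where "{w,x} \<in> E" "C{w,x} = a" using sat_rep[OF g a] by blast
  then show "\<exists>a. a \<in> satc E C w \<and> (\<exists>x. {w,x} \<in> E \<and> C{w,x} = a \<and>
      (\<forall>T\<in>rainbow_triangles V E C. \<not> ({w,x} \<subseteq> T)))" using a rt by blast
qed

lemma vdeg_complete:
  assumes "finite V" "v \<in> V"
  shows "vdeg (all_edges V) v = card V - 1"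
proof -
  have g: "edge_colored_graph V (all_edges V)" using assms(1) by (simp add: edge_colored_graph_def)
  have "card (all_edges V) = card (all_edges (V - {v})) + vdeg (all_edges V) v"
    using card_E_split[OF g, of v] all_edges_del[of V v] by simp
  moreover have "card V = Suc (card (V - {v}))" by (rule card_Suc_Diff1[symmetric, OF assms])
  ultimately show ?thesis using card_all_edges[OF assms(1)] card_all_edges[of "V - {v}"] assms(1)
      ch2[of "card (V - {v})"] by simp
qed

lemma nonrb:
  assumes "x \<in> V" "y \<in> V" "z \<in> V" "x \<noteq> y" "x \<noteq> z" "y \<noteq> z"
    and "{x,y,z} \<notin> rainbow_triangles V (all_edges V) C"
  shows "C{x,y} = C{x,z} \<or> C{x,y} = C{y,z} \<or> C{x,z} = C{y,z}"
  using assms unfolding RT_mem by auto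

lemma ctx_of:
  assumes "finite V" "v \<in> V" "a \<in> satc (all_edges V) C v"
    and "\<forall>T\<in>rainbow_triangles V (all_edges V) C. v \<notin> T"
  shows "ext_ctx V v a C"
  unfolding ext_ctx_def
proof (intro conjI ballI impI)
  show "finite V" "v \<in> V" by fact+
  show "\<And>e. e \<in> all_edges V \<Longrightarrow> C e = a \<Longrightarrow> v \<in> e" using assms(3) unfolding satc_def by auto
  fix x y assume "x \<in> V" "y \<in> V" "x \<noteq> v" "y \<noteq> v" "x \<noteq> y"
  then show "C{v,x} = C{v,y} \<or> C{v,x} = C{x,y} \<or> C{v,y} = C{x,y}"
    using nonrb[of v V x y C] assms(2,4) by auto
qed

lemma k_fresh:
  assumes "finite V" "V1 \<union> V2 = V" "\<And>x y. x \<in> V1 \<Longrightarrow> y \<in> V2 \<Longrightarrow> C{x,y} = k"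
    and "num_colors (all_edges V) C \<ge> num_colors (all_edges V1) C + num_colors (all_edges V2) C + 1"
  shows "k \<notin> C ` all_edges V1 \<and> k \<notin> C ` all_edges V2"
proof -
  have f: "finite (all_edges W)" if "finite W" for W :: "'a set" unfolding all_edges_def
    by (rule rev_finite_subset[of "Pow W"]) (use that in auto)
  have f1: "finite V1" "finite V2" using assms(1,2) by auto
  have sub: "C ` all_edges V \<subseteq> C ` all_edges V1 \<union> C ` all_edges V2 \<union> {k}"
    using cut_colors[of V1 V2 V C k, OF assms(2,3)] .
  show ?thesis
  proof (rule ccontr)
    assume "\<not> ?thesis"
    then have "C ` all_edges V1 \<union> C ` all_edges V2 \<union> {k} = C ` all_edges V1 \<union> C ` all_edges V2" by auto
    then have "num_colors (all_edges V) C \<le> card (C ` all_edges V1 \<union> C ` all_edges V2)"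
      unfolding num_colors_def using sub by (metis card_mono f f1 finite_Un finite_imageI)
    also have "\<dots> \<le> num_colors (all_edges V1) C + num_colors (all_edges V2) C"
      unfolding num_colors_def using card_Un_le by simp
    finally show False using assms(4) by simp
  qed
qed

lemma mono_cross: "mono_between V1 V2 C \<Longrightarrow> \<exists>k. \<forall>x y. x \<in> V1 \<longrightarrow> y \<in> V2 \<longrightarrow> C{x,y} = k"
  unfolding mono_between_def by blast

lemma gallai_cut:
  assumes "finite V" "card V \<ge> 2" "rainbow_triangles V (all_edges V) C = {}"
    "num_colors (all_edges V) C = card V - 1"
  shows "\<exists>V1 V2. V1 \<union> V2 = V \<and> V1 \<inter> V2 = {} \<and> V1 \<noteq> {} \<and> V2 \<noteq> {} \<and> mono_between V1 V2 C"
  using assms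
proof (induction "card V" arbitrary: V rule: less_induct)
  case less
  note fV = less.prems(1)
  have g: "edge_colored_graph V (all_edges V)" using fV by (simp add: edge_colored_graph_def)
  have ne: "V \<noteq> {}" using less.prems(2) by auto
  obtain v where v: "v \<in> V" "vdeg (all_edges V) v + card (satc (all_edges V) C v) \<le> card V"
    using low_noRT[OF g ne less.prems(3)] by blast
  have dv: "vdeg (all_edges V) v = card V - 1" using vdeg_complete[OF fV v(1)] .
  have cV: "card (V - {v}) = card V - 1" using v(1) fV by simp
  have ne': "V - {v} \<noteq> {}" using cV less.prems(2) by (metis card.empty diff_is_0_eq not_one_le_zero
        Suc_1 Suc_diff_le diff_Suc_1 le_Suc_eq nat.distinct(1))
  have rt': "rainbow_triangles (V - {v}) (all_edges (V - {v})) C = {}"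
    using RT_sub[of "V - {v}" V C] less.prems(3) by auto
  have cs: "num_colors (all_edges V) C = num_colors (all_edges (V - {v})) C + card (satc (all_edges V) C v)"
    using colors_split[OF ecg_finE[OF g], of C v] all_edges_del[of V v] by simp
  have c1: "num_colors (all_edges (V - {v})) C \<le> card V - 2"
    using colA[OF _ ne' rt'] fV cV by simp
  have s1: "card (satc (all_edges V) C v) = 1" using v(2) dv cs c1 less.prems(2,4) by linarith
  have c1': "num_colors (all_edges (V - {v})) C = card V - 2" using cs s1 less.prems(2,4) by linarith
  obtain a where a: "a \<in> satc (all_edges V) C v" using s1 by (metis card_1_singletonE insertI1)
  obtain x0 where x0: "x0 \<noteq> v" "x0 \<in> V" "{v,x0} \<in> all_edges V" "C{v,x0} = a"
    using sat_rep[OF g a] by blast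
  have ctx: "ext_ctx V v a C" using ctx_of[OF fV v(1) a] less.prems(3) by auto
  show ?case
  proof (cases "card V = 2")
    case True
    then obtain p q where pq: "V = {p,q}" "p \<noteq> q" by (auto simp: card_2_iff)
    have "{p} \<union> {q} = V" "{p} \<inter> {q} = {}" "{p} \<noteq> {}" "{q} \<noteq> {}" using pq by auto
    moreover have "mono_between {p} {q} C" unfolding mono_between_def by auto
    ultimately show ?thesis by blast
  next
    case False
    then have c2: "card (V - {v}) \<ge> 2" using cV less.prems(2) by linarith
    have "\<exists>W1 W2. W1 \<union> W2 = V - {v} \<and> W1 \<inter> W2 = {} \<and> W1 \<noteq> {} \<and> W2 \<noteq> {} \<and> mono_between W1 W2 C"
      apply (rule less.hyps)
      using cV less.prems(2) apply simp
      using fV apply simp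
      using c2 apply simp
      using rt' apply simp
      using c1' cV by simp
    then obtain W1 W2 where W: "W1 \<union> W2 = V - {v}" "W1 \<inter> W2 = {}" "W1 \<noteq> {}" "W2 \<noteq> {}"
      "mono_between W1 W2 C" by blast
    obtain k where k: "\<And>x y. x \<in> W1 \<Longrightarrow> y \<in> W2 \<Longrightarrow> C{x,y} = k" using mono_cross[OF W(5)] by blast
    have fW: "finite W1" "finite W2" using W(1) fV by (metis finite_Diff finite_Un)+
    have rW1: "rainbow_triangles W1 (all_edges W1) C = {}"
      using RT_sub[of W1 "V - {v}" C] rt' W(1) by auto
    have rW2: "rainbow_triangles W2 (all_edges W2) C = {}"
      using RT_sub[of W2 "V - {v}" C] rt' W(1) by auto
    have b1: "num_colors (all_edges W1) C \<le> card W1 - 1" using colA[OF fW(1) W(3) rW1] .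
    have b2: "num_colors (all_edges W2) C \<le> card W2 - 1" using colA[OF fW(2) W(4) rW2] .
    have cW: "card W1 + card W2 = card V - 1" using W(1,2) fW cV by (metis card_Un_disjoint)
    have pos: "card W1 \<ge> 1" "card W2 \<ge> 1" using fW W(3,4) by (auto simp: Suc_le_eq card_gt_0_iff)
    have kf: "k \<notin> C ` all_edges W1 \<and> k \<notin> C ` all_edges W2"
      apply (rule k_fresh[of "V - {v}" W1 W2 C k])
      using fV W(1) k apply auto[3]
      using c1' b1 b2 cW pos by linarith
    show ?thesis
      by (rule ext_cut[OF ctx x0(2,1,4) W(1-4) k]) (use kf in auto)
  qed
qed

lemma gallai_G0:
  assumes "finite V" "V \<noteq> {}" "rainbow_triangles V (all_edges V) C = {}"
    "num_colors (all_edges V) C = card V - 1"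
  shows "in_G0 V C"
  using assms
proof (induction "card V" arbitrary: V rule: less_induct)
  case less
  note fV = less.prems(1)
  show ?case
  proof (cases "card V = 1")
    case True
    then show ?thesis by (rule in_G0.single)
  next
    case False
    then have c2: "card V \<ge> 2" using less.prems(2) fV
      by (metis One_nat_def Suc_1 Suc_leI card_gt_0_iff le_neq_implies_less)
    obtain V1 V2 where P: "V1 \<union> V2 = V" "V1 \<inter> V2 = {}" "V1 \<noteq> {}" "V2 \<noteq> {}" "mono_between V1 V2 C"
      using gallai_cut[OF fV c2 less.prems(3,4)] by blast
    obtain k where k: "\<And>x y. x \<in> V1 \<Longrightarrow> y \<in> V2 \<Longrightarrow> C{x,y} = k" using mono_cross[OF P(5)] by blast
    have fW: "finite V1" "finite V2" using P(1) fV by auto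
    have rW1: "rainbow_triangles V1 (all_edges V1) C = {}"
      using RT_sub[of V1 V C] less.prems(3) P(1) by auto
    have rW2: "rainbow_triangles V2 (all_edges V2) C = {}"
      using RT_sub[of V2 V C] less.prems(3) P(1) by auto
    have b1: "num_colors (all_edges V1) C \<le> card V1 - 1" using colA[OF fW(1) P(3) rW1] .
    have b2: "num_colors (all_edges V2) C \<le> card V2 - 1" using colA[OF fW(2) P(4) rW2] .
    have cW: "card V1 + card V2 = card V" using P(1,2) fW by (metis card_Un_disjoint)
    have pos: "card V1 \<ge> 1" "card V2 \<ge> 1" using fW P(3,4) by (auto simp: Suc_le_eq card_gt_0_iff)
    have cc: "num_colors (all_edges V) C \<le> num_colors (all_edges V1) C + num_colors (all_edges V2) C + 1"
      using cut_count[of V V1 V2 C k, OF fV P(1) k] .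
    have e1: "num_colors (all_edges V1) C = card V1 - 1" using cc b1 b2 cW pos less.prems(4) by linarith
    have e2: "num_colors (all_edges V2) C = card V2 - 1" using cc b1 b2 cW pos less.prems(4) by linarith
    have "in_G0 V1 C" by (rule less.hyps[OF _ fW(1) P(3) rW1 e1]) (use cW pos in linarith)
    moreover have "in_G0 V2 C" by (rule less.hyps[OF _ fW(2) P(4) rW2 e2]) (use cW pos in linarith)
    ultimately show ?thesis
      by (rule in_G0.split[OF fV c2 less.prems(4) P(1-5)])
  qed
qed

lemma low_vertex2:
  assumes g: "edge_colored_graph V E"
    and good: "(\<forall>u\<in>V. vdeg E u + card (satc E C u) > card V) \<Longrightarrow>
       \<exists>v a x. v \<in> V \<and> (\<forall>w\<in>V. card (satc E C w) \<le> card (satc E C v)) \<and> a \<in> satc E C v \<and>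
          {v,x} \<in> E \<and> C{v,x} = a \<and> (\<forall>T\<in>rainbow_triangles V E C. \<not> ({v,x} \<subseteq> T))"
  shows "\<exists>v\<in>V. vdeg E v + card (satc E C v) \<le> card V"
proof (rule ccontr)
  assume H: "\<not> ?thesis"
  then have "\<forall>u\<in>V. vdeg E u + card (satc E C u) > card V" by auto
  from good[OF this] obtain v a x where vax: "v \<in> V" "\<forall>w\<in>V. card (satc E C w) \<le> card (satc E C v)"
    "a \<in> satc E C v" "{v,x} \<in> E" "C{v,x} = a" "\<forall>T\<in>rainbow_triangles V E C. \<not> ({v,x} \<subseteq> T)"
    by blast
  have xV: "x \<in> V" using ecg_edge[OF g vax(4)] by auto
  have "vdeg E x + card (satc E C v) \<le> card V" using key[OF g vax(1,3,4,5,6)] .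
  moreover have "vdeg E x + card (satc E C x) > card V" using H xV by auto
  ultimately show False using vax(2) xV by fastforce
qed

lemma far_rep:
  assumes g: "edge_colored_graph V E" and s3: "card (satc E C v) \<ge> 3"
    and T: "finite T" "card T = 3" "v \<in> T"
  shows "\<exists>a x. a \<in> satc E C v \<and> {v,x} \<in> E \<and> C{v,x} = a \<and> x \<notin> T"
proof (rule ccontr)
  assume H: "\<not> ?thesis"
  have "satc E C v \<subseteq> (\<lambda>x. C{v,x}) ` (T - {v})"
  proof
    fix a assume a: "a \<in> satc E C v"
    then obtain x where "x \<noteq> v" "x \<in> V" "{v,x} \<in> E" "C{v,x} = a" using sat_rep[OF g a] by blast
    then show "a \<in> (\<lambda>x. C{v,x}) ` (T - {v})" using H a by blast
  qed
  then have "card (satc E C v) \<le> card ((\<lambda>x. C{v,x}) ` (T - {v}))"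
    using T(1) by (simp add: card_mono)
  also have "\<dots> \<le> card (T - {v})" using T(1) by (simp add: card_image_le)
  also have "\<dots> = 2" using T by simp
  finally show False using s3 by simp
qed

lemma G0_colors: "in_G0 W C \<Longrightarrow> num_colors (all_edges W) C = card W - 1 \<and> finite W \<and> W \<noteq> {}"
proof (induction rule: in_G0.cases)
  case (single V C)
  then obtain w where "V = {w}" by (auto simp: card_1_singleton_iff)
  then have "all_edges V = {}" unfolding all_edges_def by (auto simp: card_2_iff)
  then show ?case using single \<open>V = {w}\<close> by (simp add: num_colors_def)
next
  case (split V C V1 V2)
  then show ?case by auto
qed

lemma G1_colors: "in_G1 W C \<Longrightarrow> num_colors (all_edges W) C = card W \<and> finite W \<and> card W \<ge> 3"
proof (induction rule: in_G1.cases)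
  case (triangle V C)
  then show ?case by (metis card.infinite le_refl zero_neq_numeral)
next
  case (split V C V1 V2)
  then show ?case by auto
qed

lemma mono_sym: "mono_between A B C \<Longrightarrow> mono_between B A C"
  unfolding mono_between_def by (metis insert_commute)

lemma crossing:
  assumes T: "T \<in> rainbow_triangles V E C" and P: "V1 \<union> V2 = V" "V1 \<inter> V2 = {}"
    and cr: "\<And>x y. x \<in> V1 \<Longrightarrow> y \<in> V2 \<Longrightarrow> C{x,y} = k"
  shows "T \<subseteq> V1 \<or> T \<subseteq> V2"
proof -
  obtain x y z where h: "T = {x,y,z}" "x\<noteq>y" "x\<noteq>z" "y\<noteq>z" "x \<in> V" "y \<in> V" "z \<in> V"
      "C{x,y} \<noteq> C{x,z}" "C{x,y} \<noteq> C{y,z}" "C{x,z} \<noteq> C{y,z}"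
    using T unfolding RT_mem by blast
  have cr2: "C{p,q} = k" if "p \<in> V1 \<and> q \<in> V2 \<or> p \<in> V2 \<and> q \<in> V1" for p q
  proof -
    have "{p,q} = {q,p}" by blast
    then show ?thesis using that cr by metis
  qed
  have m: "x \<in> V1 \<or> x \<in> V2" "y \<in> V1 \<or> y \<in> V2" "z \<in> V1 \<or> z \<in> V2" using h P by auto
  have d: "x \<in> V2 \<longleftrightarrow> x \<notin> V1" "y \<in> V2 \<longleftrightarrow> y \<notin> V1" "z \<in> V2 \<longleftrightarrow> z \<notin> V1"
    using m P(2) by auto
  have a1: "(x \<in> V1) \<noteq> (y \<in> V1) \<Longrightarrow> C{x,y} = k" by (rule cr2) (use d in auto)
  have a2: "(x \<in> V1) \<noteq> (z \<in> V1) \<Longrightarrow> C{x,z} = k" by (rule cr2) (use d in auto)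
  have a3: "(y \<in> V1) \<noteq> (z \<in> V1) \<Longrightarrow> C{y,z} = k" by (rule cr2) (use d in auto)
  have "(x \<in> V1 \<and> y \<in> V1 \<and> z \<in> V1) \<or> (x \<notin> V1 \<and> y \<notin> V1 \<and> z \<notin> V1)"
  proof (cases "x \<in> V1"; cases "y \<in> V1"; cases "z \<in> V1")
  qed (use a1 a2 a3 h(8,9,10) in simp_all)
  then show ?thesis using h(1) d by auto
qed
lemma tri_ext:
  assumes ctx: "ext_ctx V v a C" and U: "card (V - {v}) = 3" "num_colors (all_edges (V - {v})) C = 3"
    and x0: "x0 \<in> V - {v}" "C{v,x0} = a"
  shows "\<forall>y\<in>V - {v}. C{v,y} = a"
proof (rule ccontr)
  assume "\<not> ?thesis"
  then obtain y where y: "y \<in> V - {v}" "C{v,y} \<noteq> a" by auto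
  have xy: "x0 \<noteq> y" using x0 y by auto
  have fU: "finite (V - {v})" using U(1) by (metis card.infinite zero_neq_numeral)
  have "card (V - {v} - {x0,y}) = 1" using U(1) x0 y xy fU by (simp add: card_Diff_subset)
  then obtain z where z: "V - {v} - {x0,y} = {z}" by (auto simp: card_1_singleton_iff)
  have Ueq: "V - {v} = {x0,y,z}" using z x0 y by auto
  have zd: "z \<noteq> x0" "z \<noteq> y" "z \<in> V" "z \<noteq> v" using z by auto
  have "card (C ` {{x0,y},{x0,z},{y,z}}) = 3" using U(2) Ueq all_edges_3'[of x0 y z] xy zd
    unfolding num_colors_def by auto
  then have dc: "C{x0,y} \<noteq> C{x0,z}" "C{x0,y} \<noteq> C{y,z}" "C{x0,z} \<noteq> C{y,z}"
    by (auto simp: card3_distinct)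
  have sat: "\<forall>e\<in>all_edges V. C e = a \<longrightarrow> v \<in> e"
    and nr: "\<forall>x\<in>V. \<forall>y\<in>V. x \<noteq> v \<longrightarrow> y \<noteq> v \<longrightarrow> x \<noteq> y \<longrightarrow>
        C{v,x} = C{v,y} \<or> C{v,x} = C{x,y} \<or> C{v,y} = C{x,y}"
    using ctx unfolding ext_ctx_def by blast+
  have na: "C{x0,y} \<noteq> a" "C{x0,z} \<noteq> a" "C{y,z} \<noteq> a"
    using sat x0 y zd xy by auto
  have x0V: "x0 \<in> V" "x0 \<noteq> v" and yV: "y \<in> V" "y \<noteq> v" using x0 y by auto
  have m1: "C{v,x0} = C{v,y} \<or> C{v,x0} = C{x0,y} \<or> C{v,y} = C{x0,y}"
    using nr[rule_format, OF x0V(1) yV(1) x0V(2) yV(2) xy] .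
  have m2: "C{v,y} = C{v,z} \<or> C{v,y} = C{y,z} \<or> C{v,z} = C{y,z}"
    using nr[rule_format, OF yV(1) zd(3) yV(2) zd(4)] zd(2) by auto
  have m3: "C{v,x0} = C{v,z} \<or> C{v,x0} = C{x0,z} \<or> C{v,z} = C{x0,z}"
    using nr[rule_format, OF x0V(1) zd(3) x0V(2) zd(4)] zd(1) by auto
  have n1: "C{v,y} = C{x0,y}" using m1 na(1) y(2) x0(2) by auto
  show False using n1 m2 m3 dc na x0(2) by auto
qed
lemma s_le1:
  assumes g: "edge_colored_graph V E" and v: "v \<in> V"
    and comp: "delv E v = all_edges (V - {v})"
    and nov: "\<forall>T\<in>rainbow_triangles V E C. v \<notin> T"
  shows "card (satc E C v) \<le> 1"
proof -
  have fS: "finite (satc E C v)" unfolding satc_def using ecg_finE[OF g] by auto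
  have "\<forall>a\<in>satc E C v. \<forall>b\<in>satc E C v. a = b"
  proof (intro ballI, rule ccontr)
    fix a b assume a: "a \<in> satc E C v" and b: "b \<in> satc E C v" and ab: "a \<noteq> b"
    obtain x where x: "x \<noteq> v" "x \<in> V" "{v,x} \<in> E" "C{v,x} = a" using sat_rep[OF g a] by blast
    obtain y where y: "y \<noteq> v" "y \<in> V" "{v,y} \<in> E" "C{v,y} = b" using sat_rep[OF g b] by blast
    have xy: "x \<noteq> y" using x y ab by auto
    have exy: "{x,y} \<in> E" using comp x y xy unfolding delv_def by (metis (no_types, lifting)
          DiffI mem_Collect_eq pair_in_all_edges singletonD)
    have c1: "C{x,y} \<noteq> a" using sat_color[OF a exy] x y by auto
    have c2: "C{x,y} \<noteq> b" using sat_color[OF b exy] x y by auto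
    have "{v,x,y} \<in> rainbow_triangles V E C" unfolding RT_mem
      apply (rule exI[of _ v], rule exI[of _ x], rule exI[of _ y])
      using x y xy exy c1 c2 ab v by auto
    then show False using nov by auto
  qed
  then show ?thesis using fS by (simp add: card_le_Suc0_iff_eq)
qed

lemma good1:
  assumes g: "edge_colored_graph V E" and c4: "card V \<ge> 4"
    and rt: "rainbow_triangles V E C = {T}"
    and high: "\<forall>u\<in>V. vdeg E u + card (satc E C u) > card V"
  shows "\<exists>v a x. v \<in> V \<and> (\<forall>w\<in>V. card (satc E C w) \<le> card (satc E C v)) \<and> a \<in> satc E C v \<and>
          {v,x} \<in> E \<and> C{v,x} = a \<and> (\<forall>T\<in>rainbow_triangles V E C. \<not> ({v,x} \<subseteq> T))"
proof -
  let ?s = "\<lambda>w. card (satc E C w)"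
  have fV: "finite V" using g edge_colored_graph_def by auto
  have TV: "T \<subseteq> V" "card T = 3" using rt unfolding rainbow_triangles_def by auto
  have fT: "finite T" using TV(1) fV finite_subset by blast
  have s2: "?s u \<ge> 2" if "u \<in> V" for u
  proof -
    have "vdeg E u \<le> card V - 1" using vdeg_le[OF g that] .
    moreover have "card V > 0" using fV that card_gt_0_iff by blast
    ultimately show ?thesis using high that by fastforce
  qed
  have easy: "\<exists>v a x. v \<in> V \<and> (\<forall>w\<in>V. ?s w \<le> ?s v) \<and> a \<in> satc E C v \<and>
          {v,x} \<in> E \<and> C{v,x} = a \<and> (\<forall>T\<in>rainbow_triangles V E C. \<not> ({v,x} \<subseteq> T))"
    if u: "u \<in> V" "u \<notin> T" "\<forall>w\<in>V. ?s w \<le> ?s u" for u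
  proof -
    obtain a where a: "a \<in> satc E C u" using s2[OF u(1)] by fastforce
    obtain x where x: "{u,x} \<in> E" "C{u,x} = a" using sat_rep[OF g a] by blast
    have "\<forall>T\<in>rainbow_triangles V E C. \<not> ({u,x} \<subseteq> T)" using rt u(2) by auto
    then show ?thesis using u a x by blast
  qed
  have "Max (?s ` V) \<in> ?s ` V" using fV c4 by (intro Max_in) auto
  then obtain v where v1: "v \<in> V" "?s v = Max (?s ` V)" by auto
  have vmax: "\<forall>w\<in>V. ?s w \<le> ?s v" using v1(2) fV by auto
  show ?thesis
  proof (cases "v \<in> T")
    case False
    then show ?thesis using easy v1(1) vmax by blast
  next
    case True
    show ?thesis
    proof (cases "?s v \<ge> 3")
      case True
      obtain a x where "a \<in> satc E C v" "{v,x} \<in> E" "C{v,x} = a" "x \<notin> T"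
        using far_rep[OF g True fT TV(2) \<open>v \<in> T\<close>] by blast
      moreover have "\<forall>T'\<in>rainbow_triangles V E C. \<not> ({v,x} \<subseteq> T')" using rt \<open>x \<notin> T\<close> by auto
      ultimately show ?thesis using v1(1) vmax by blast
    next
      case False
      have "V - T \<noteq> {}"
      proof
        assume "V - T = {}"
        then have "V \<subseteq> T" by auto
        then have "card V \<le> card T" using fT card_mono by blast
        then show False using TV(2) c4 by simp
      qed
      then obtain u where u: "u \<in> V" "u \<notin> T" by auto
      have "\<forall>w\<in>V. ?s w \<le> ?s u" using vmax False s2[OF u(1)] by fastforce
      then show ?thesis using easy u by blast
    qed
  qed
qed

lemma mainQ:
  assumes "edge_colored_graph V E" "card V \<ge> 3"
    "card E + num_colors E C \<ge> Suc (card V) choose 2"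
    "card (rainbow_triangles V E C) = 1"
  shows "E = all_edges V \<and> in_G1 V C"
  using assms
proof (induction "card V" arbitrary: V E rule: less_induct)
  case less
  note g = less.prems(1)
  have fV: "finite V" using g edge_colored_graph_def by auto
  obtain T where rt: "rainbow_triangles V E C = {T}" using less.prems(4) by (auto simp: card_1_singleton_iff)
  have TV: "T \<subseteq> V" "card T = 3" "all_edges T \<subseteq> E" "card (C ` all_edges T) = 3"
    using rt unfolding rainbow_triangles_def by auto
  have fT: "finite T" using TV(1) fV finite_subset by blast
  have EV: "E \<subseteq> all_edges V" using g edge_colored_graph_def by auto
  show ?case
  proof (cases "card V = 3")
    case True
    have TeqV: "T = V" by (rule card_subset_eq[OF fV TV(1)]) (simp add: True TV(2))
    have "E = all_edges V" using TV(3) EV TeqV by auto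
    moreover have "in_G1 V C" by (rule in_G1.triangle) (use True TV TeqV in \<open>auto simp: num_colors_def\<close>)
    ultimately show ?thesis by simp
  next
    case False
    then have c4: "card V \<ge> 4" using less.prems(2) by linarith
    obtain v where v: "v \<in> V" "vdeg E v + card (satc E C v) \<le> card V"
      using low_vertex2[OF g good1[OF g c4 rt]] by blast
    have cV: "card (V - {v}) = card V - 1" using v(1) fV by simp
    have gv: "edge_colored_graph (V - {v}) (delv E v)" using ecg_delv[OF g] .
    have split: "card E + num_colors E C = card (delv E v) + num_colors (delv E v) C + (vdeg E v + card (satc E C v))"
      using card_E_split[OF g, of v] colors_split[OF ecg_finE[OF g], of C v] by simp
    have chV: "Suc (card V) choose 2 = (Suc (card (V - {v})) choose 2) + card V"
      using cV c4 ch2[of "card V"] by (simp add: Suc_diff_1)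
    have vT: "v \<notin> T"
    proof
      assume "v \<in> T"
      then have "rainbow_triangles (V - {v}) (delv E v) C = {}" using RT_delv[of V v E C] rt by auto
      moreover have "card (V - {v}) \<noteq> 0" using cV c4 by simp
      then have "V - {v} \<noteq> {}" by (metis card.empty)
      ultimately have "card (delv E v) + num_colors (delv E v) C < Suc (card (V - {v})) choose 2"
        using thmA[OF gv] by blast
      then show False using split chV v(2) less.prems(3) by linarith
    qed
    have rtv: "rainbow_triangles (V - {v}) (delv E v) C = {T}" using RT_delv[of V v E C] rt vT by auto
    have IH: "delv E v = all_edges (V - {v}) \<and> in_G1 (V - {v}) C"
      apply (rule less.hyps)
      using cV c4 apply simp
      using gv apply simp
      using cV c4 apply simp
      using split chV v(2) less.prems(3) apply linarith
      using rtv by simp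
    have cv1: "num_colors (delv E v) C = card V - 1" using G1_colors[of "V - {v}" C] IH cV by simp
    have ev1: "card (delv E v) = card (V - {v}) choose 2" using IH card_all_edges[of "V - {v}"] fV by simp
    obtain m where m: "card V = Suc m" using c4 by (cases "card V") auto
    have h1: "Suc (card V) choose 2 = (card V choose 2) + card V" by (rule ch2)
    have h2: "card V choose 2 = (m choose 2) + m" using ch2[of m] m by simp
    have ev1': "card (delv E v) = m choose 2" using ev1 cV m by simp
    have cv1': "num_colors (delv E v) C = m" using cv1 m by simp
    have ds: "vdeg E v + card (satc E C v) \<ge> card V"
      using split h1 h2 ev1' cv1' less.prems(3) m by linarith
    have s1: "card (satc E C v) \<le> 1" by (rule s_le1[OF g v(1)]) (use IH rt vT in auto)
    have d1: "vdeg E v \<le> card V - 1" using vdeg_le[OF g v(1)] .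
    have deq: "vdeg E v = card V - 1" using ds s1 d1 c4 by linarith
    have seq: "card (satc E C v) = 1" using ds s1 d1 c4 by linarith
    have inc: "{e\<in>E. v \<in> e} = {e\<in>all_edges V. v \<in> e}"
    proof (rule card_subset_eq)
      show "finite {e\<in>all_edges V. v \<in> e}" using ecg_finE[of V "all_edges V"] fV
        by (simp add: edge_colored_graph_def)
      show "{e\<in>E. v \<in> e} \<subseteq> {e\<in>all_edges V. v \<in> e}" using EV by auto
      show "card {e\<in>E. v \<in> e} = card {e\<in>all_edges V. v \<in> e}"
        using deq vdeg_complete[OF fV v(1)] unfolding vdeg_def by simp
    qed
    have Ecomp: "E = all_edges V"
    proof -
      have "E = delv E v \<union> {e\<in>E. v \<in> e}" unfolding delv_def by auto
      also have "\<dots> = delv (all_edges V) v \<union> {e\<in>all_edges V. v \<in> e}"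
        using IH inc all_edges_del[of V v] by simp
      also have "\<dots> = all_edges V" unfolding delv_def by auto
      finally show ?thesis .
    qed
    have ncV: "num_colors (all_edges V) C = card V"
      using colors_split[OF ecg_finE[OF g], of C v] cv1 seq Ecomp c4 by simp
    have rtc: "rainbow_triangles V (all_edges V) C = {T}" using rt Ecomp by simp
    obtain a where a: "a \<in> satc (all_edges V) C v" using seq Ecomp by (auto simp: card_1_singleton_iff)
    have gc: "edge_colored_graph V (all_edges V)" using fV by (simp add: edge_colored_graph_def)
    obtain x0 where x0: "x0 \<noteq> v" "x0 \<in> V" "{v,x0} \<in> all_edges V" "C{v,x0} = a"
      using sat_rep[OF gc a] by blast
    have ctx: "ext_ctx V v a C" using ctx_of[OF fV v(1) a] rtc vT by auto
    have "\<exists>V1 V2. V1 \<union> V2 = V \<and> V1 \<inter> V2 = {} \<and> V1 \<noteq> {} \<and> V2 \<noteq> {} \<and> mono_between V1 V2 C"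
    proof -
      have "in_G1 (V - {v}) C" using IH by simp
      then show ?thesis
      proof (cases rule: in_G1.cases)
        case triangle
        have allA: "\<forall>y\<in>V - {v}. C{v,y} = a"
          by (rule tri_ext[OF ctx triangle]) (use x0 in auto)
        have "{v} \<union> (V - {v}) = V" "{v} \<inter> (V - {v}) = {}" "{v} \<noteq> {}" "V - {v} \<noteq> {}"
          using v(1) x0 by auto
        moreover have "mono_between {v} (V - {v}) C" unfolding mono_between_def
          by (rule exI[of _ a]) (use allA in auto)
        ultimately show ?thesis by (intro exI[of _ "{v}"] exI[of _ "V - {v}"]) simp
      next
        case (split W1 W2)
        obtain k where k: "\<And>x y. x \<in> W1 \<Longrightarrow> y \<in> W2 \<Longrightarrow> C{x,y} = k" using mono_cross[OF split(8)] by blast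
        have c1: "num_colors (all_edges W1) C = card W1" using G1_colors[OF split(9)] by simp
        have c2: "num_colors (all_edges W2) C = card W2 - 1" using G0_colors[OF split(10)] by simp
        have fWU: "finite (W1 \<union> W2)" using split(1) unfolding split(4) .
        have fW: "finite W1" "finite W2" using fWU by simp_all
        have cW: "card W1 + card W2 = card V - 1" using card_Un_disjoint[OF fW split(5)] split(4) cV by simp
        have pos: "card W2 \<ge> 1" using fW split(7) by (auto simp: Suc_le_eq card_gt_0_iff)
        have kf: "k \<notin> C ` all_edges W1 \<and> k \<notin> C ` all_edges W2"
          apply (rule k_fresh[of "V - {v}" W1 W2 C k])
          using fV split(4) k apply auto[3]
          using split(3) c1 c2 cW pos cV by linarith
        show ?thesis
          by (rule ext_cut[OF ctx x0(2,1,4) split(4-7) k]) (use kf in auto)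
      qed
    qed
    then obtain V1 V2 where P0: "V1 \<union> V2 = V" "V1 \<inter> V2 = {}" "V1 \<noteq> {}" "V2 \<noteq> {}" "mono_between V1 V2 C"
      by blast
    obtain k0 where k0: "\<And>x y. x \<in> V1 \<Longrightarrow> y \<in> V2 \<Longrightarrow> C{x,y} = k0" using mono_cross[OF P0(5)] by blast
    have Tin: "T \<in> rainbow_triangles V (all_edges V) C" using rtc by simp
    have "\<exists>P1 P2. P1 \<union> P2 = V \<and> P1 \<inter> P2 = {} \<and> P1 \<noteq> {} \<and> P2 \<noteq> {} \<and> mono_between P1 P2 C \<and> T \<subseteq> P1"
    proof (cases "T \<subseteq> V1")
      case True
      then show ?thesis using P0 by blast
    next
      case False
      then have "T \<subseteq> V2" using crossing[OF Tin P0(1,2) k0] by blast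
      moreover have "V2 \<union> V1 = V" "V2 \<inter> V1 = {}" using P0 by auto
      ultimately show ?thesis using P0(3,4) mono_sym[OF P0(5)] by blast
    qed
    then obtain P1 P2 where P: "P1 \<union> P2 = V" "P1 \<inter> P2 = {}" "P1 \<noteq> {}" "P2 \<noteq> {}"
      "mono_between P1 P2 C" "T \<subseteq> P1" by blast
    obtain k where k: "\<And>x y. x \<in> P1 \<Longrightarrow> y \<in> P2 \<Longrightarrow> C{x,y} = k" using mono_cross[OF P(5)] by blast
    have fP: "finite P1" "finite P2" using P(1) fV by auto
    have rP2: "rainbow_triangles P2 (all_edges P2) C = {}"
    proof -
      have "\<not> T \<subseteq> P2"
      proof
        assume "T \<subseteq> P2"
        then have "T = {}" using P(2,6) by auto
        then show False using TV(2) by simp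
      qed
      then show ?thesis using RT_sub[of P2 V C] rtc P(1) by auto
    qed
    have rP1: "rainbow_triangles P1 (all_edges P1) C = {T}"
      using RT_sub[of P1 V C] rtc P(1,6) by auto
    have b2: "num_colors (all_edges P2) C \<le> card P2 - 1" using colA[OF fP(2) P(4) rP2] .
    have cc: "num_colors (all_edges V) C \<le> num_colors (all_edges P1) C + num_colors (all_edges P2) C + 1"
      using cut_count[of V P1 P2 C k, OF fV P(1) k] .
    have cP: "card P1 + card P2 = card V" using card_Un_disjoint[OF fP P(2)] P(1) by simp
    have pos: "card P2 \<ge> 1" using fP P(4) by (auto simp: Suc_le_eq card_gt_0_iff)
    have P13: "card P1 \<ge> 3" using card_mono[OF fP(1) P(6)] TV(2) by simp
    have lt: "card P1 < card V" using cP pos by linarith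
    have ge1: "num_colors (all_edges P1) C \<ge> card P1" using cc b2 ncV cP pos by linarith
    have "all_edges P1 = all_edges P1 \<and> in_G1 P1 C"
      apply (rule less.hyps[OF lt])
      using fP(1) apply (simp add: edge_colored_graph_def)
      using P13 apply simp
      using ge1 card_all_edges[OF fP(1)] ch2[of "card P1"] apply simp
      using rP1 by simp
    then have G1P1: "in_G1 P1 C" by simp
    have e1: "num_colors (all_edges P1) C = card P1" using G1_colors[OF G1P1] by simp
    have e2: "num_colors (all_edges P2) C = card P2 - 1" using cc b2 ncV cP pos e1 by linarith
    have G0P2: "in_G0 P2 C" by (rule gallai_G0[OF fP(2) P(4) rP2 e2])
    have "in_G1 V C" by (rule in_G1.split[OF fV c4 ncV P(1-5) G1P1 G0P2])
    then show ?thesis using Ecomp by simp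
  qed
qed

theorem theorem3:
  fixes V :: "'a set" and E :: "'a set set" and C :: "'a set \<Rightarrow> nat"
  assumes "edge_colored_graph V E"
    and "card V \<ge> 3"
    and "card E + num_colors E C \<ge> (card V + 1) choose 2"
    and "card (rainbow_triangles V E C) = 1"
  shows "E = all_edges V \<and> in_G1 V C"
  using mainQ[OF assms(1,2) _ assms(4)] assms(3) by simp

end
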